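(* Let $\mathcal{D}$ be a bounded convex domain in a complex Banach space $X$, and let $\mathcal{F}=\{F_t\}_{t\ge0}$ be a one-parameter continuous semigroup of holomorphic self-mappings of $\mathcal{D}$. Then $\mathcal{F}$ acts strictly inside $\mathcal{D}$: for every subset $\mathcal{D}^*$ lying strictly inside $\mathcal{D}$ and every $t_0>0$, the set $\{F_t(x):\ x\in\mathcal{D}^*,\ t\in[0,t_0]\}$ lies strictly inside $\mathcal{D}$.
   Context: A subset $\mathcal{D}^*\subset\mathcal{D}$ lies strictly inside $\mathcal{D}$ if it is bounded and $\inf_{x\in\mathcal{D}^*}\operatorname{dist}(x,\partial\mathcal{D})>0$. A one-parameter continuous semigroup on $\mathcal{D}$ is a family $\{F_t\}_{t\ge0}$ of (Fréchet) holomorphic maps $F_t:\mathcal{D}\to\mathcal{D}$ such that $F_{t+s}=F_t\circ F_s$ for all $t,s\ge0$ and $\lim_{t\to0^+}F_t(x)=x$ for every $x\in\mathcal{D}$. *)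

theory Defs
  imports "HOL-Analysis.Analysis"
begin

class complex_banach = banach +
  fixes scaleC :: "complex \<Rightarrow> 'a \<Rightarrow> 'a"
  assumes scaleC_of_real: "scaleC (complex_of_real r) x = r *\<^sub>R x"
    and scaleC_add_right: "scaleC a (x + y) = scaleC a x + scaleC a y"
    and scaleC_add_left: "scaleC (a + b) x = scaleC a x + scaleC b x"
    and scaleC_scaleC: "scaleC a (scaleC b x) = scaleC (a * b) x"
    and norm_scaleC: "norm (scaleC a x) = cmod a * norm x"

definition frechet_holomorphic_on ::
  "('a::complex_banach \<Rightarrow> 'b::complex_banach) \<Rightarrow> 'a set \<Rightarrow> bool" where
  "frechet_holomorphic_on f S \<longleftrightarrow>
     (\<forall>x\<in>S. \<exists>f'. (f has_derivative f') (at x) \<and> (\<forall>a h. f' (scaleC a h) = scaleC a (f' h)))"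

definition strictly_inside :: "'a::real_normed_vector set \<Rightarrow> 'a set \<Rightarrow> bool" where
  "strictly_inside Ds D \<longleftrightarrow> Ds \<subseteq> D \<and> bounded Ds \<and>
     (\<exists>e>0. \<forall>x\<in>Ds. infdist x (frontier D) \<ge> e)"

definition continuous_holo_semigroup ::
  "(real \<Rightarrow> 'a::complex_banach \<Rightarrow> 'a) \<Rightarrow> 'a set \<Rightarrow> bool" where
  "continuous_holo_semigroup F D \<longleftrightarrow>
     (\<forall>t\<ge>0. frechet_holomorphic_on (F t) D \<and> F t ` D \<subseteq> D) \<and>
     (\<forall>t\<ge>0. \<forall>s\<ge>0. \<forall>x\<in>D. F (t + s) x = F t (F s x)) \<and>
     (\<forall>x\<in>D. ((\<lambda>t. F t x) \<longlongrightarrow> x) (at_right 0))"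

end

theory Submission
  imports Defs "HOL-Complex_Analysis.Complex_Analysis"
begin

definition sublin :: "('a::real_vector \<Rightarrow> real) \<Rightarrow> bool" where
  "sublin p \<longleftrightarrow> (\<forall>x y. p (x + y) \<le> p x + p y) \<and> (\<forall>s x. 0 < s \<longrightarrow> p (s *\<^sub>R x) = s * p x)"

lemma sublin_zero: "sublin p \<Longrightarrow> p 0 = 0"
proof -
  assume "sublin p"
  then have "p ((2::real) *\<^sub>R 0) = 2 * p 0" unfolding sublin_def by (metis zero_less_numeral)
  then show ?thesis by simp
qed

lemma sublin_add: "sublin p \<Longrightarrow> p (x + y) \<le> p x + p y"
  unfolding sublin_def by blast

lemma sublin_scale: "sublin p \<Longrightarrow> 0 < s \<Longrightarrow> p (s *\<^sub>R x) = s * p x"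
  unfolding sublin_def by blast

lemma sublin_neg: "sublin p \<Longrightarrow> - p (- x) \<le> p x"
  using sublin_add[of p x "-x"] sublin_zero[of p] by simp

definition pdir :: "('a::real_vector \<Rightarrow> real) \<Rightarrow> 'a \<Rightarrow> 'a \<Rightarrow> real" where
  "pdir p y x = Inf ((\<lambda>t. p (x + t *\<^sub>R y) - t * p y) ` {0<..})"

lemma pdir_lb:
  assumes "sublin p" "t > 0"
  shows "- p (- x) \<le> p (x + t *\<^sub>R y) - t * p y"
proof -
  have "p (t *\<^sub>R y) \<le> p (x + t *\<^sub>R y) + p (- x)"
    using sublin_add[OF assms(1), of "x + t *\<^sub>R y" "-x"] by simp
  then show ?thesis using sublin_scale[OF assms] by simp
qed

lemma pdir_bdd: "sublin p \<Longrightarrow> bdd_below ((\<lambda>t. p (x + t *\<^sub>R y) - t * p y) ` {0<..})"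
  by (rule bdd_belowI[of _ "- p (- x)"]) (auto intro: pdir_lb)

lemma pdir_le: "sublin p \<Longrightarrow> t > 0 \<Longrightarrow> pdir p y x \<le> p (x + t *\<^sub>R y) - t * p y"
  unfolding pdir_def by (rule cInf_lower) (auto intro: pdir_bdd)

lemma pdir_ge: "sublin p \<Longrightarrow> (\<And>t. t > 0 \<Longrightarrow> b \<le> p (x + t *\<^sub>R y) - t * p y) \<Longrightarrow> b \<le> pdir p y x"
  unfolding pdir_def by (rule cInf_greatest) auto

lemma pdir_below: "sublin p \<Longrightarrow> pdir p y x \<le> p x"
  using pdir_le[of p 1 y x] sublin_add[of p x y] by simp

lemma pdir_neg: "sublin p \<Longrightarrow> pdir p y (- y) \<le> - p y"
  using pdir_le[of p 1 y "-y"] sublin_zero[of p] by simp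

lemma pdir_sublin:
  assumes p: "sublin p"
  shows "sublin (pdir p y)"
  unfolding sublin_def
proof (intro conjI allI impI)
  fix x1 x2
  have A: "pdir p y (x1 + x2) - (p (x2 + t2 *\<^sub>R y) - t2 * p y) \<le> p (x1 + t1 *\<^sub>R y) - t1 * p y"
    if "t1 > 0" "t2 > 0" for t1 t2
  proof -
    have "pdir p y (x1 + x2) \<le> p ((x1 + x2) + (t1 + t2) *\<^sub>R y) - (t1 + t2) * p y"
      using pdir_le[OF p, of "t1 + t2"] that by simp
    also have "p ((x1 + x2) + (t1 + t2) *\<^sub>R y) \<le> p (x1 + t1 *\<^sub>R y) + p (x2 + t2 *\<^sub>R y)"
      using sublin_add[OF p, of "x1 + t1 *\<^sub>R y" "x2 + t2 *\<^sub>R y"]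
      by (simp add: algebra_simps scaleR_add_left)
    finally show ?thesis by (simp add: algebra_simps)
  qed
  have B: "pdir p y (x1 + x2) - (p (x2 + t2 *\<^sub>R y) - t2 * p y) \<le> pdir p y x1" if "t2 > 0" for t2
    by (rule pdir_ge[OF p]) (use A that in auto)
  have "pdir p y (x1 + x2) - pdir p y x1 \<le> pdir p y x2"
    by (rule pdir_ge[OF p]) (use B in force)
  then show "pdir p y (x1 + x2) \<le> pdir p y x1 + pdir p y x2" by simp
next
  fix s :: real and x assume s: "0 < s"
  have "pdir p y (s *\<^sub>R x) / s \<le> pdir p y x"
  proof (rule pdir_ge[OF p])
    fix t :: real assume t: "t > 0"
    have "pdir p y (s *\<^sub>R x) \<le> p (s *\<^sub>R x + (s * t) *\<^sub>R y) - (s * t) * p y"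
      using pdir_le[OF p, of "s * t"] s t by simp
    also have "p (s *\<^sub>R x + (s * t) *\<^sub>R y) = s * p (x + t *\<^sub>R y)"
      using sublin_scale[OF p s, of "x + t *\<^sub>R y"] by (simp add: scaleR_add_right)
    finally show "pdir p y (s *\<^sub>R x) / s \<le> p (x + t *\<^sub>R y) - t * p y"
      using s by (simp add: divide_simps algebra_simps)
  qed
  moreover have "s * pdir p y x \<le> pdir p y (s *\<^sub>R x)"
  proof (rule pdir_ge[OF p])
    fix t :: real assume t: "t > 0"
    have "pdir p y x \<le> p (x + (t / s) *\<^sub>R y) - (t / s) * p y"
      using pdir_le[OF p, of "t / s"] s t by simp
    also have "p (x + (t / s) *\<^sub>R y) = p (s *\<^sub>R x + t *\<^sub>R y) / s"
      using sublin_scale[OF p s, of "x + (t / s) *\<^sub>R y"] s by (simp add: scaleR_add_right)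
    finally show "s * pdir p y x \<le> p (s *\<^sub>R x + t *\<^sub>R y) - t * p y"
      using s by (simp add: divide_simps algebra_simps)
  qed
  ultimately show "pdir p y (s *\<^sub>R x) = s * pdir p y x"
    using s by (simp add: divide_simps mult.commute)
qed

lemma sublin_minimal_linear:
  assumes m: "sublin m" and min: "\<And>y. pdir m y = m"
  shows "linear m"
proof -
  have neg: "m (- y) = - m y" for y
    using pdir_neg[OF m, of y] min[of y] sublin_neg[OF m, of y] by simp
  have add: "m (x + y) = m x + m y" for x y
  proof -
    have "m x \<le> m (x + y) + m (- y)" using sublin_add[OF m, of "x + y" "- y"] by simp
    then show ?thesis using neg[of y] sublin_add[OF m, of x y] by simp
  qed
  have sc: "m (c *\<^sub>R x) = c *\<^sub>R m x" for c x
  proof (cases "c > 0")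
    case True then show ?thesis using sublin_scale[OF m] by simp
  next
    case False
    show ?thesis
    proof (cases "c = 0")
      case True then show ?thesis using sublin_zero[OF m] by simp
    next
      case False
      then have "- c > 0" using \<open>\<not> c > 0\<close> by simp
      then have "m ((- c) *\<^sub>R x) = (- c) * m x" using sublin_scale[OF m] by blast
      then show ?thesis using neg[of "(- c) *\<^sub>R x"] by simp
    qed
  qed
  show ?thesis by (rule linearI) (use add sc in auto)
qed

theorem sublin_dominates_linear:
  fixes p0 :: "'a::real_vector \<Rightarrow> real"
  assumes p0: "sublin p0"
  shows "\<exists>l. linear l \<and> (\<forall>x. l x \<le> p0 x)"
proof -
  define A where "A = {q. sublin q \<and> (\<forall>x. q x \<le> p0 x)}"
  define P where "P = (\<lambda>a u :: 'a \<Rightarrow> real. \<forall>x. u x \<le> a x)"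
  have po: "partial_order_on A (relation_of P A)"
    unfolding partial_order_on_def preorder_on_def refl_on_def trans_def antisym_def relation_of_def P_def
    apply auto
    apply (meson order_trans)
    by (simp add: antisym le_funI)
  have lbA: "- p0 (- x) \<le> q x" if "q \<in> A" for q x
  proof -
    have "sublin q" "q (- x) \<le> p0 (- x)" using that unfolding A_def by auto
    then show ?thesis using sublin_neg[of q x] by linarith
  qed
  have ch: "\<exists>u \<in> A. \<forall>a \<in> C. P a u" if C: "C \<in> Chains (relation_of P A)" for C
  proof (cases "C = {}")
    case True then show ?thesis using p0 unfolding A_def by auto
  next
    case False
    have CA: "C \<subseteq> A" using Chains_relation_of[OF C] .
    have cmp: "P a b \<or> P b a" if "a \<in> C" "b \<in> C" for a b
      using C that unfolding Chains_def relation_of_def by auto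
    define u where "u = (\<lambda>x. Inf ((\<lambda>q. q x) ` C))"
    have bdd: "bdd_below ((\<lambda>q. q x) ` C)" for x
      by (rule bdd_belowI[of _ "- p0 (- x)"]) (use lbA CA in auto)
    have ule: "u x \<le> q x" if "q \<in> C" for q x
      unfolding u_def by (rule cInf_lower) (use that bdd in auto)
    have uge: "b \<le> u x" if "\<And>q. q \<in> C \<Longrightarrow> b \<le> q x" for b x
      unfolding u_def by (rule cInf_greatest) (use that False in auto)
    have subl: "\<forall>q\<in>C. sublin q" using CA unfolding A_def by auto
    have "sublin u"
      unfolding sublin_def
    proof (intro conjI allI impI)
      fix x y
      have A1: "u (x + y) - q2 y \<le> q1 x" if "q1 \<in> C" "q2 \<in> C" for q1 q2
      proof (cases "P q1 q2")
        case True
        then have "u (x + y) \<le> q2 x + q2 y" using ule[OF that(2), of "x+y"] sublin_add[of q2 x y] subl that by fastforce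
        moreover have "q2 x \<le> q1 x" using True unfolding P_def by blast
        ultimately show ?thesis by linarith
      next
        case False
        then have "P q2 q1" using cmp that by blast
        then have "u (x + y) \<le> q1 x + q1 y" using ule[OF that(1), of "x+y"] sublin_add[of q1 x y] subl that by fastforce
        moreover have "q1 y \<le> q2 y" using \<open>P q2 q1\<close> unfolding P_def by blast
        ultimately show ?thesis by linarith
      qed
      have A2: "u (x + y) - q2 y \<le> u x" if "q2 \<in> C" for q2
        by (rule uge) (rule A1[OF _ that])
      have "u (x + y) - u x \<le> u y"
      proof (rule uge)
        fix q assume "q \<in> C"
        from A2[OF this] show "u (x + y) - u x \<le> q y" by linarith
      qed
      then show "u (x + y) \<le> u x + u y" by simp
    next
      fix s :: real and x assume s: "0 < s"
      have "u (s *\<^sub>R x) / s \<le> u x"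
      proof (rule uge)
        fix q assume q: "q \<in> C"
        have "u (s *\<^sub>R x) \<le> s * q x" using ule[OF q, of "s *\<^sub>R x"] sublin_scale[of q s x] subl q s by simp
        then show "u (s *\<^sub>R x) / s \<le> q x" using s by (simp add: divide_simps mult.commute)
      qed
      moreover have "s * u x \<le> u (s *\<^sub>R x)"
      proof (rule uge)
        fix q assume q: "q \<in> C"
        have "s * u x \<le> s * q x" using ule[OF q, of x] s by simp
        then show "s * u x \<le> q (s *\<^sub>R x)" using sublin_scale[of q s x] subl q s by simp
      qed
      ultimately show "u (s *\<^sub>R x) = s * u x" using s by (simp add: divide_simps mult.commute)
    qed
    moreover have "u x \<le> p0 x" for x
    proof -
      obtain q where "q \<in> C" using False by blast
      then have "q x \<le> p0 x" using CA unfolding A_def by auto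
      then show ?thesis using ule[OF \<open>q \<in> C\<close>, of x] by linarith
    qed
    ultimately have "u \<in> A" unfolding A_def by auto
    moreover have "\<forall>a\<in>C. P a u" unfolding P_def using ule by auto
    ultimately show ?thesis by blast
  qed
  obtain m where mA: "m \<in> A" and mmax: "\<forall>a \<in> A. P m a \<longrightarrow> a = m"
    using predicate_Zorn[OF po ch] by blast
  have ms: "sublin m" using mA unfolding A_def by auto
  have "pdir m y = m" for y
  proof -
    have "pdir m y x \<le> p0 x" for x
      using pdir_below[OF ms, of y x] mA unfolding A_def by (blast intro: order_trans)
    then have "pdir m y \<in> A"
      using pdir_sublin[OF ms] unfolding A_def by blast
    moreover have "P m (pdir m y)" unfolding P_def using pdir_below[OF ms] by auto
    ultimately show ?thesis using mmax by simp
  qed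
  then have "linear m" using sublin_minimal_linear[OF ms] by blast
  then show ?thesis using mA unfolding A_def by auto
qed

corollary sublin_HB_point:
  fixes p :: "'a::real_vector \<Rightarrow> real"
  assumes p: "sublin p"
  shows "\<exists>l. linear l \<and> (\<forall>x. l x \<le> p x) \<and> p v \<le> l v"
proof -
  obtain l where l: "linear l" "\<forall>x. l x \<le> pdir p v x"
    using sublin_dominates_linear[OF pdir_sublin[OF p]] by blast
  have "l (- v) \<le> - p v" using l(2) pdir_neg[OF p, of v] by (blast intro: order_trans)
  then have "p v \<le> l v" using linear_neg[OF l(1), of v] by simp
  moreover have "\<forall>x. l x \<le> p x" using l(2) pdir_below[OF p] by (blast intro: order_trans)
  ultimately show ?thesis using l(1) by blast
qed

definition mink :: "'a::real_normed_vector set \<Rightarrow> 'a \<Rightarrow> real" where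
  "mink K x = Inf {s. 0 < s \<and> inverse s *\<^sub>R x \<in> K}"

lemma mink_nonempty:
  fixes K :: "'a::real_normed_vector set"
  assumes "open K" "0 \<in> K"
  shows "\<exists>s>0. inverse s *\<^sub>R x \<in> K"
proof -
  obtain r where r: "r > 0" "ball 0 r \<subseteq> K" using assms open_contains_ball by blast
  define s where "s = (norm x + 1) / r"
  have s: "s > 0" using r unfolding s_def by (intro divide_pos_pos add_nonneg_pos) auto
  have "norm (inverse s *\<^sub>R x) = norm x * r / (norm x + 1)"
    using r by (simp add: s_def field_simps)
  also have "\<dots> < r"
  proof -
    have "norm x * r < r * (norm x + 1)" using r by (simp add: algebra_simps)
    then show ?thesis using r by (simp add: divide_simps add_nonneg_pos)
  qed
  finally have "inverse s *\<^sub>R x \<in> K" using r by auto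
  then show ?thesis using s by blast
qed

lemma mink_le:
  "0 < s \<Longrightarrow> inverse s *\<^sub>R x \<in> K \<Longrightarrow> mink K x \<le> s"
  unfolding mink_def by (rule cInf_lower) (auto intro: bdd_belowI[of _ 0])

lemma mink_ge:
  fixes K :: "'a::real_normed_vector set"
  assumes "open K" "0 \<in> K" "\<And>s. 0 < s \<Longrightarrow> inverse s *\<^sub>R x \<in> K \<Longrightarrow> b \<le> s"
  shows "b \<le> mink K x"
  unfolding mink_def by (rule cInf_greatest) (use assms mink_nonempty[OF assms(1,2), of x] in auto)

lemma mink_sublin:
  fixes K :: "'a::real_normed_vector set"
  assumes K: "open K" "convex K" "0 \<in> K"
  shows "sublin (mink K)"
  unfolding sublin_def
proof (intro conjI allI impI)
  fix x y
  have A: "mink K (x + y) \<le> s + t" if s: "0 < s" "inverse s *\<^sub>R x \<in> K"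
      and t: "0 < t" "inverse t *\<^sub>R y \<in> K" for s t
  proof (rule mink_le)
    show "0 < s + t" using s t by simp
    have "inverse (s + t) *\<^sub>R (x + y) =
        (s / (s + t)) *\<^sub>R (inverse s *\<^sub>R x) + (t / (s + t)) *\<^sub>R (inverse t *\<^sub>R y)"
      using s t by (simp add: scaleR_add_right divide_simps)
    also have "\<dots> \<in> K"
      by (rule convexD[OF K(2) s(2) t(2)]) (use s t in \<open>auto simp: divide_simps\<close>)
    finally show "inverse (s + t) *\<^sub>R (x + y) \<in> K" .
  qed
  have B: "mink K (x + y) - t \<le> mink K x" if t: "0 < t" "inverse t *\<^sub>R y \<in> K" for t
  proof (rule mink_ge[OF K(1,3)])
    fix s assume "0 < s" "inverse s *\<^sub>R x \<in> K"
    from A[OF this t] show "mink K (x + y) - t \<le> s" by linarith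
  qed
  have "mink K (x + y) - mink K x \<le> mink K y"
  proof (rule mink_ge[OF K(1,3)])
    fix t assume "0 < t" "inverse t *\<^sub>R y \<in> K"
    from B[OF this] show "mink K (x + y) - mink K x \<le> t" by linarith
  qed
  then show "mink K (x + y) \<le> mink K x + mink K y" by linarith
next
  fix a :: real and x assume a: "0 < a"
  have "mink K (a *\<^sub>R x) / a \<le> mink K x"
  proof (rule mink_ge[OF K(1,3)])
    fix s assume s: "0 < s" "inverse s *\<^sub>R x \<in> K"
    have "inverse (a * s) * a = inverse s" using a s by (simp add: field_simps)
    then have "inverse (a * s) *\<^sub>R (a *\<^sub>R x) = inverse s *\<^sub>R x" by (simp only: scaleR_scaleR)
    then have "inverse (a * s) *\<^sub>R (a *\<^sub>R x) \<in> K" using s(2) by metis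
    then have "mink K (a *\<^sub>R x) \<le> a * s" using s a by (intro mink_le) auto
    then show "mink K (a *\<^sub>R x) / a \<le> s" using a by (simp add: divide_simps mult.commute)
  qed
  moreover have "a * mink K x \<le> mink K (a *\<^sub>R x)"
  proof (rule mink_ge[OF K(1,3)])
    fix s assume s: "0 < s" "inverse s *\<^sub>R (a *\<^sub>R x) \<in> K"
    have "inverse (s / a) = inverse s * a" using a s by (simp add: field_simps)
    then have "inverse (s / a) *\<^sub>R x = inverse s *\<^sub>R (a *\<^sub>R x)" by (simp only: scaleR_scaleR)
    then have "inverse (s / a) *\<^sub>R x \<in> K" using s(2) by metis
    then have "mink K x \<le> s / a" using s a by (intro mink_le) auto
    then show "a * mink K x \<le> s" using a by (simp add: divide_simps mult.commute)
  qed
  ultimately show "mink K (a *\<^sub>R x) = a * mink K x" using a by (simp add: divide_simps mult.commute)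
qed

lemma mink_lt1:
  fixes K :: "'a::real_normed_vector set"
  assumes K: "open K" and z: "z \<in> K"
  shows "mink K z < 1"
proof -
  obtain e where e: "e > 0" "ball z e \<subseteq> K" using K z open_contains_ball by blast
  define h where "h = e / (2 * (norm z + 1))"
  have h: "h > 0" using e unfolding h_def by (intro divide_pos_pos mult_pos_pos add_nonneg_pos) auto
  have "norm ((1 + h) *\<^sub>R z - z) = h * norm z" using h by (simp add: algebra_simps)
  also have "\<dots> < e" using e by (simp add: h_def divide_simps) (smt (verit, best) mult_left_mono norm_ge_zero)
  finally have "(1 + h) *\<^sub>R z \<in> K" using e by (auto simp: dist_norm norm_minus_commute)
  then have "mink K z \<le> inverse (1 + h)" using h by (intro mink_le) auto
  also have "\<dots> < 1" using h by (simp add: divide_simps)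
  finally show ?thesis .
qed

lemma mink_ge1:
  fixes K :: "'a::real_normed_vector set"
  assumes K: "open K" "convex K" "0 \<in> K" and v: "v \<notin> K"
  shows "1 \<le> mink K v"
proof (rule mink_ge[OF K(1,3)])
  fix s assume s: "0 < s" "inverse s *\<^sub>R v \<in> K"
  show "1 \<le> s"
  proof (rule ccontr)
    assume "\<not> 1 \<le> s"
    then have "s *\<^sub>R (inverse s *\<^sub>R v) + (1 - s) *\<^sub>R 0 \<in> K"
      using s K by (intro convexD) auto
    then show False using v s by simp
  qed
qed

theorem convex_separation:
  fixes D :: "'a::real_normed_vector set"
  assumes D: "open D" "convex D" "c \<in> D" and q: "q \<notin> D"
  shows "\<exists>l::'a \<Rightarrow> real. linear l \<and> (\<forall>z\<in>D. l z < l q)"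
proof -
  define K where "K = (\<lambda>z. z - c) ` D"
  have K: "open K" "convex K" "0 \<in> K"
    using D by (auto simp: K_def open_translation_subtract convex_translation_subtract)
  have inK: "z - c \<in> K \<longleftrightarrow> z \<in> D" for z by (auto simp: K_def)
  obtain l where l: "linear l" "\<forall>x. l x \<le> mink K x" "mink K (q - c) \<le> l (q - c)"
    using sublin_HB_point[OF mink_sublin[OF K], of "q - c"] by blast
  have "l z < l q" if "z \<in> D" for z
  proof -
    have "l (z - c) < 1" using l(2) mink_lt1[OF K(1), of "z - c"] inK that by (meson le_less_trans)
    moreover have "1 \<le> l (q - c)" using mink_ge1[OF K, of "q - c"] inK q l(3) by auto
    ultimately show ?thesis using linear_diff[OF l(1)] by simp
  qed
  then show ?thesis using l(1) by (intro exI[of _ l]) auto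
qed


instantiation complex :: complex_banach
begin
definition scaleC_complex :: "complex \<Rightarrow> complex \<Rightarrow> complex" where
  "scaleC_complex a z = a * z"
instance
  by standard (auto simp: scaleC_complex_def scaleR_conv_of_real algebra_simps norm_mult)
end

lemma scaleC_zero_left [simp]: "scaleC 0 x = 0"
  using scaleC_of_real[of 0 x] by simp

lemma scaleC_one_left [simp]: "scaleC 1 x = x"
  using scaleC_of_real[of 1 x] by simp

lemma bounded_linear_scaleC_left: "bounded_linear (\<lambda>h. scaleC h u)"
proof (rule bounded_linear_intro[of _ "norm u"])
  fix x y :: complex show "scaleC (x + y) u = scaleC x u + scaleC y u" by (rule scaleC_add_left)
next
  fix r :: real and x :: complex
  have "scaleC (r *\<^sub>R x) u = scaleC (complex_of_real r * x) u" by (simp add: scaleR_conv_of_real)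
  also have "\<dots> = scaleC (complex_of_real r) (scaleC x u)" by (simp add: scaleC_scaleC)
  also have "\<dots> = r *\<^sub>R scaleC x u" by (simp add: scaleC_of_real)
  finally show "scaleC (r *\<^sub>R x) u = r *\<^sub>R scaleC x u" .
next
  fix x :: complex show "norm (scaleC x u) \<le> norm x * norm u" by (simp add: norm_scaleC)
qed

lemma frechet_holomorphic_compose:
  fixes f :: "'a::complex_banach \<Rightarrow> 'b::complex_banach" and g :: "'b \<Rightarrow> 'c::complex_banach"
  assumes f: "frechet_holomorphic_on f D" and fD: "f ` D \<subseteq> E" and g: "frechet_holomorphic_on g E"
  shows "frechet_holomorphic_on (\<lambda>x. g (f x)) D"
  unfolding frechet_holomorphic_on_def
proof
  fix x assume x: "x \<in> D"
  obtain f' where f': "(f has_derivative f') (at x)" "\<forall>a h. f' (scaleC a h) = scaleC a (f' h)"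
    using f x unfolding frechet_holomorphic_on_def by blast
  obtain g' where g': "(g has_derivative g') (at (f x))" "\<forall>a h. g' (scaleC a h) = scaleC a (g' h)"
    using g fD x unfolding frechet_holomorphic_on_def by blast
  have "((\<lambda>x. g (f x)) has_derivative (\<lambda>h. g' (f' h))) (at x)"
    using has_derivative_compose[OF f'(1) g'(1)] .
  moreover have "\<forall>a h. g' (f' (scaleC a h)) = scaleC a (g' (f' h))" using f'(2) g'(2) by simp
  ultimately show "\<exists>f'. ((\<lambda>x. g (f x)) has_derivative f') (at x) \<and> (\<forall>a h. f' (scaleC a h) = scaleC a (f' h))"
    by blast
qed

lemma frechet_line_holomorphic:
  fixes H :: "'a::complex_banach \<Rightarrow> complex"
  assumes H: "frechet_holomorphic_on H D" and sub: "\<And>w. w \<in> S \<Longrightarrow> z + scaleC w u \<in> D"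
  shows "(\<lambda>w. H (z + scaleC w u)) holomorphic_on S"
  unfolding holomorphic_on_def
proof
  fix w assume w: "w \<in> S"
  obtain H' where H': "(H has_derivative H') (at (z + scaleC w u))" "\<forall>a h. H' (scaleC a h) = scaleC a (H' h)"
    using H sub[OF w] unfolding frechet_holomorphic_on_def by blast
  have "((\<lambda>h. scaleC h u) has_derivative (\<lambda>h. scaleC h u)) (at w)"
    by (rule bounded_linear_imp_has_derivative[OF bounded_linear_scaleC_left])
  then have "((\<lambda>h. scaleC h u + z) has_derivative (\<lambda>h. scaleC h u)) (at w)"
    by (rule has_derivative_add_const)
  then have lin: "((\<lambda>w. z + scaleC w u) has_derivative (\<lambda>h. scaleC h u)) (at w)"
    by (simp add: add.commute)
  have "((\<lambda>w. H (z + scaleC w u)) has_derivative (\<lambda>h. H' (scaleC h u))) (at w)"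
    using has_derivative_compose[OF lin H'(1)] .
  moreover have "(\<lambda>h. H' (scaleC h u)) = (\<lambda>h. H' u * h)"
    using H'(2) by (auto simp: scaleC_complex_def mult.commute)
  ultimately have "((\<lambda>w. H (z + scaleC w u)) has_field_derivative H' u) (at w)"
    by (simp add: has_field_derivative_def)
  then show "(\<lambda>w. H (z + scaleC w u)) field_differentiable at w within S"
    using field_differentiable_at_within field_differentiable_def by blast
qed

definition qf :: "real \<Rightarrow> real" where "qf r = (1 + r) / (1 - r)"

lemma qf_real_step:
  fixes r s d X :: real
  assumes r: "0 \<le> r" "r < 1" and s: "0 \<le> s" "s < 1" and d: "s - r \<le> d" "0 \<le> d"
    and X: "X\<^sup>2 = d\<^sup>2 + (1 - r\<^sup>2) * (1 - s\<^sup>2)" "0 \<le> X" and h: "2 * d \<le> X"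
  shows "qf s \<le> 3 * qf r"
proof -
  have "4 * d\<^sup>2 \<le> X\<^sup>2" using h d(2) by (metis mult_2 mult_mono' power2_eq_square zero_le_mult_iff add_nonneg_nonneg order.refl  four_x_squared power_mono zero_le_numeral)
  then have 3: "3 * d\<^sup>2 \<le> (1 - r\<^sup>2) * (1 - s\<^sup>2)" using X by simp
  have key: "(1 + s) * (1 - r) \<le> 3 * ((1 + r) * (1 - s))"
  proof (cases "s \<le> r")
    case True
    have "0 \<le> (1 + r) * (1 - s)" using r s by simp
    then show ?thesis using True by (simp add: algebra_simps)
  next
    case False
    have "(s - r)\<^sup>2 \<le> d\<^sup>2" using d False by (intro power_mono) auto
    then have "4 * (s - r)\<^sup>2 \<le> (1 - r * s)\<^sup>2" using 3 by (simp add: power2_eq_square algebra_simps)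
    then have "2 * (s - r) \<le> 1 - r * s"
      using False r s by (smt (verit, ccfv_SIG) four_x_squared mult_le_one power2_le_imp_le)
    then show ?thesis by (simp add: algebra_simps)
  qed
  show ?thesis unfolding qf_def using key r s by (simp add: divide_simps algebra_simps)
qed

lemma disk_ident:
  fixes a b :: complex
  shows "cmod (1 - cnj a * b) ^ 2 = cmod (b - a) ^ 2 + (1 - cmod a ^ 2) * (1 - cmod b ^ 2)"
  unfolding cmod_power2 by (simp add: algebra_simps power2_eq_square)

lemma qf_step:
  fixes a b :: complex
  assumes a: "norm a < 1" and b: "norm b < 1" and m: "norm (Moebius_function 0 a b) \<le> 1/2"
  shows "qf (norm b) \<le> 3 * qf (norm a)"
proof -
  define X where "X = cmod (1 - cnj a * b)"
  have Xid: "X\<^sup>2 = cmod (b - a) ^ 2 + (1 - cmod a ^ 2) * (1 - cmod b ^ 2)"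
    unfolding X_def by (rule disk_ident)
  have "0 < (1 - cmod a ^ 2) * (1 - cmod b ^ 2)"
    using a b by (simp add: power_less_one_iff abs_square_less_1)
  then have "0 < X\<^sup>2" using Xid by (smt (verit) zero_le_power2)
  then have Xpos: "0 < X" unfolding X_def by simp
  have "cmod (b - a) / X \<le> 1/2" using m unfolding X_def by (simp add: Moebius_function_simple norm_divide)
  then have h: "2 * cmod (b - a) \<le> X" using Xpos by (simp add: divide_simps)
  show ?thesis
    by (rule qf_real_step[OF _ a _ b _ _ Xid _ h]) (use Xpos norm_triangle_ineq2[of b a] in auto)
qed

lemma schwarz_step:
  assumes hol: "\<phi> holomorphic_on ball 0 1" and into: "\<And>z. norm z < 1 \<Longrightarrow> norm (\<phi> z) < 1"
    and w: "norm w < 1"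
  shows "norm (Moebius_function 0 (\<phi> 0) (\<phi> w)) \<le> norm w"
proof -
  define \<psi> where "\<psi> = (\<lambda>z. Moebius_function 0 (\<phi> 0) (\<phi> z))"
  have n0: "norm (\<phi> 0) < 1" using into by simp
  have "\<phi> ` ball 0 1 \<subseteq> ball 0 1" using into by auto
  then have "\<psi> holomorphic_on ball 0 1"
    unfolding \<psi>_def
    using holomorphic_on_compose_gen[OF hol Moebius_function_holomorphic[OF n0, of 0]]
    by (auto simp: o_def)
  moreover have "\<psi> 0 = 0" unfolding \<psi>_def by (simp add: Moebius_function_eq_zero)
  moreover have "norm (\<psi> z) < 1" if "norm z < 1" for z
    unfolding \<psi>_def using Moebius_function_norm_lt_1[OF n0 into[OF that]] .
  ultimately show ?thesis using Schwarz_Lemma(1)[of \<psi> w] w unfolding \<psi>_def by blast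
qed

lemma local_step:
  fixes H :: "'a::complex_banach \<Rightarrow> complex"
  assumes H: "frechet_holomorphic_on H D" "H ` D \<subseteq> ball 0 1"
    and ball: "ball z \<rho> \<subseteq> D" and rho: "\<rho> > 0" and close: "norm (z' - z) \<le> \<rho> / 2"
  shows "qf (norm (H z')) \<le> 3 * qf (norm (H z))"
proof -
  define u where "u = 2 *\<^sub>R (z' - z)"
  have inD: "z + scaleC w u \<in> D" if "w \<in> ball 0 1" for w
  proof -
    have "norm (scaleC w u) = cmod w * (2 * norm (z' - z))" by (simp add: u_def norm_scaleC)
    also have "\<dots> \<le> cmod w * \<rho>" using close by (intro mult_left_mono) auto
    also have "\<dots> < \<rho>"
      using rho that by simp
    finally show ?thesis using ball by (auto simp: dist_norm)
  qed
  define \<phi> where "\<phi> = (\<lambda>w. H (z + scaleC w u))"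
  have hol: "\<phi> holomorphic_on ball 0 1" unfolding \<phi>_def by (rule frechet_line_holomorphic[OF H(1) inD])
  have into: "norm (\<phi> w) < 1" if "norm w < 1" for w
    using H(2) inD[of w] that unfolding \<phi>_def by auto
  have half: "norm (1/2 :: complex) < 1" by simp
  have "norm (Moebius_function 0 (\<phi> 0) (\<phi> (1/2))) \<le> 1/2"
    using schwarz_step[OF hol into half] by simp
  moreover have "\<phi> 0 = H z" unfolding \<phi>_def by simp
  moreover have "\<phi> (1/2) = H z'"
  proof -
    have "scaleC (1/2 :: complex) u = scaleC (complex_of_real (1/2)) u" by simp
    also have "\<dots> = (1/2) *\<^sub>R u" by (rule scaleC_of_real)
    also have "\<dots> = z' - z" by (simp add: u_def)
    finally show ?thesis unfolding \<phi>_def by simp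
  qed
  ultimately show ?thesis using qf_step into by (metis norm_zero zero_less_one into half)
qed

lemma hp_disk:
  fixes w :: complex and a :: real
  assumes a: "a > 0" and w: "Re w < a"
  shows "cmod (w / (complex_of_real (2 * a) - w)) < 1"
    and "a / (4 * (a - Re w)) \<le> qf (cmod (w / (complex_of_real (2 * a) - w)))"
proof -
  define \<beta> where "\<beta> = a - Re w"
  have \<beta>: "\<beta> > 0" using w by (simp add: \<beta>_def)
  define X where "X = cmod (complex_of_real (2 * a) - w) ^ 2"
  define Y where "Y = cmod w ^ 2"
  have Xe: "X = (2 * a - Re w)\<^sup>2 + (Im w)\<^sup>2" unfolding X_def cmod_power2 by simp
  have Ye: "Y = (Re w)\<^sup>2 + (Im w)\<^sup>2" unfolding Y_def cmod_power2 by simp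
  have XY: "X - Y = 4 * a * \<beta>" unfolding Xe Ye \<beta>_def by (simp add: power2_eq_square algebra_simps)
  have "a\<^sup>2 \<le> (2 * a - Re w)\<^sup>2" using a w by (intro power_mono) auto
  then have Xa: "a\<^sup>2 \<le> X" unfolding Xe by (smt (verit) zero_le_power2)
  have Xpos: "X > 0" using Xa a by (smt (verit) zero_less_power2)
  define \<rho> where "\<rho> = cmod (w / (complex_of_real (2 * a) - w))"
  have \<rho>0: "\<rho> \<ge> 0" unfolding \<rho>_def by simp
  have \<rho>2: "\<rho>\<^sup>2 = Y / X" unfolding \<rho>_def X_def Y_def by (simp add: norm_divide power_divide)
  have "Y < X" using XY a \<beta> by (smt (verit) mult_pos_pos)
  then have "\<rho>\<^sup>2 < 1" using \<rho>2 Xpos by simp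
  then have \<rho>1: "\<rho> < 1" using \<rho>0 by (smt (verit) one_le_power)
  then show "cmod (w / (complex_of_real (2 * a) - w)) < 1" unfolding \<rho>_def .
  have "1 - \<rho>\<^sup>2 = (X - Y) / X" using \<rho>2 Xpos by (simp add: divide_simps algebra_simps)
  also have "\<dots> = 4 * a * \<beta> / X" using XY by simp
  also have "\<dots> \<le> 4 * a * \<beta> / a\<^sup>2" using Xa a \<beta> Xpos by (intro divide_left_mono) auto
  also have "\<dots> = 4 * \<beta> / a" using a by (simp add: power2_eq_square)
  finally have A: "1 - \<rho>\<^sup>2 \<le> 4 * \<beta> / a" .
  have "\<rho> * \<rho> \<le> \<rho> * 1" using \<rho>0 \<rho>1 by (intro mult_left_mono) auto
  then have "1 - \<rho> \<le> 1 - \<rho>\<^sup>2" by (simp add: power2_eq_square)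
  then have B: "1 - \<rho> \<le> 4 * \<beta> / a" using A by linarith
  have "a / (4 * \<beta>) \<le> 1 / (1 - \<rho>)"
    using B \<rho>1 a \<beta> by (simp add: divide_simps mult.commute)
  also have "\<dots> \<le> qf \<rho>" unfolding qf_def using \<rho>0 \<rho>1 by (intro divide_right_mono) auto
  finally show "a / (4 * (a - Re w)) \<le> qf (cmod (w / (complex_of_real (2 * a) - w)))"
    unfolding \<rho>_def \<beta>_def .
qed

lemma disk_functional:
  fixes D :: "'a::complex_banach set"
  assumes D: "open D" "convex D" "c \<in> D" and ball: "ball c r \<subseteq> D" and r: "r > 0" and q: "q \<notin> D"
  shows "\<exists>g :: 'a \<Rightarrow> complex. frechet_holomorphic_on g D \<and> g ` D \<subseteq> ball 0 1 \<and> g c = 0 \<and>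
             (\<forall>y\<in>D. r \<le> qf (norm (g y)) * (8 * norm (q - y)))"
proof -
  obtain l :: "'a \<Rightarrow> real" where l: "linear l" "\<And>z. z \<in> D \<Longrightarrow> l z < l q"
    using convex_separation[OF D q] by blast
  define a where "a = l q - l c"
  have a: "a > 0" using l(2)[OF D(3)] by (simp add: a_def)
  have lup: "l v \<le> (2 * a / r) * norm v" for v
  proof (cases "v = 0")
    case True then show ?thesis using linear_0[OF l(1)] by simp
  next
    case False
    define w where "w = (r / (2 * norm v)) *\<^sub>R v"
    have "norm w = r / 2" using False r by (simp add: w_def)
    then have "c + w \<in> D" using ball r by (auto simp: dist_norm)
    then have "l (c + w) < l q" by (rule l(2))
    then have "(r / (2 * norm v)) * l v < a"
      using linear_add[OF l(1)] linear_scale[OF l(1)] by (simp add: w_def a_def)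
    then show ?thesis using False r by (simp add: field_simps)
  qed
  have labs: "\<bar>l v\<bar> \<le> (2 * a / r) * norm v" for v
    using lup[of v] lup[of "- v"] linear_neg[OF l(1), of v] by simp
  define li where "li = (\<lambda>z. l (scaleC \<i> z))"
  have scI: "scaleC \<i> (x *\<^sub>R z) = x *\<^sub>R scaleC \<i> z" for x :: real and z :: 'a
  proof -
    have "scaleC \<i> (x *\<^sub>R z) = scaleC \<i> (scaleC (complex_of_real x) z)" by (simp add: scaleC_of_real)
    also have "\<dots> = scaleC (complex_of_real x) (scaleC \<i> z)" by (simp add: scaleC_scaleC mult.commute)
    finally show ?thesis by (simp add: scaleC_of_real)
  qed
  have li_lin: "linear li"
    unfolding li_def
    by (rule linearI) (simp_all add: scaleC_add_right linear_add[OF l(1)] scI linear_scale[OF l(1)])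
  have scII: "scaleC \<i> (scaleC \<i> z) = - z" for z :: 'a
    using scaleC_scaleC[of \<i> \<i> z] scaleC_of_real[of "-1" z] by simp
  have scdecomp: "scaleC \<alpha> h = Re \<alpha> *\<^sub>R h + Im \<alpha> *\<^sub>R scaleC \<i> h" for \<alpha> :: complex and h :: 'a
  proof -
    have "\<alpha> = complex_of_real (Re \<alpha>) + \<i> * complex_of_real (Im \<alpha>)" by (simp add: complex_eq_iff)
    then have "scaleC \<alpha> h = scaleC (complex_of_real (Re \<alpha>)) h + scaleC \<i> (scaleC (complex_of_real (Im \<alpha>)) h)"
      by (metis scaleC_add_left scaleC_scaleC)
    then show ?thesis by (simp add: scaleC_of_real scI)
  qed
  define L where "L = (\<lambda>z. Complex (l z) (- li z))"
  have Llin: "L (scaleC \<alpha> h) = \<alpha> * L h" for \<alpha> h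
  proof -
    have "l (scaleC \<alpha> h) = l (Re \<alpha> *\<^sub>R h + Im \<alpha> *\<^sub>R scaleC \<i> h)"
      by (subst scdecomp[of \<alpha> h]) (rule refl)
    also have "\<dots> = Re \<alpha> * l h + Im \<alpha> * li h"
      unfolding li_def linear_add[OF l(1)] linear_scale[OF l(1)] by simp
    finally have "l (scaleC \<alpha> h) = Re \<alpha> * l h + Im \<alpha> * li h" .
    moreover have "li (scaleC \<alpha> h) = Re \<alpha> * li h - Im \<alpha> * l h"
    proof -
      have "li (scaleC \<alpha> h) = l (scaleC \<i> (Re \<alpha> *\<^sub>R h + Im \<alpha> *\<^sub>R scaleC \<i> h))"
        unfolding li_def by (subst scdecomp[of \<alpha> h]) (rule refl)
      also have "\<dots> = l (Re \<alpha> *\<^sub>R scaleC \<i> h + Im \<alpha> *\<^sub>R scaleC \<i> (scaleC \<i> h))"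
        by (simp only: scaleC_add_right scI)
      also have "\<dots> = l (Re \<alpha> *\<^sub>R scaleC \<i> h + Im \<alpha> *\<^sub>R (- h))"
        by (simp only: scII)
      also have "\<dots> = Re \<alpha> * li h - Im \<alpha> * l h"
        unfolding li_def linear_add[OF l(1)] linear_scale[OF l(1)] linear_neg[OF l(1)] by simp
      finally show ?thesis .
    qed
    ultimately show ?thesis unfolding L_def by (simp add: complex_eq_iff)
  qed
  have Ladd: "L (x + y) = L x + L y" for x y
    unfolding L_def li_def by (simp add: complex_eq_iff linear_add[OF l(1)] scaleC_add_right)
  have LRe: "Re (L z) = l z" for z unfolding L_def by simp
  have Lbl: "bounded_linear L"
  proof (rule bounded_linear_intro[of _ "4 * a / r"])
    show "L (x + y) = L x + L y" for x y by (rule Ladd)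
    show "L (s *\<^sub>R x) = s *\<^sub>R L x" for s x
      using Llin[of "complex_of_real s" x] by (simp add: scaleC_of_real scaleR_conv_of_real)
    show "norm (L x) \<le> norm x * (4 * a / r)" for x
    proof -
      have "norm (L x) \<le> \<bar>l x\<bar> + \<bar>li x\<bar>" using cmod_le[of "L x"] unfolding L_def by simp
      also have "\<dots> \<le> (2 * a / r) * norm x + (2 * a / r) * norm x"
        using labs[of x] labs[of "scaleC \<i> x"] unfolding li_def by (simp add: norm_scaleC)
      finally show ?thesis by (simp add: algebra_simps)
    qed
  qed
  define W where "W = (\<lambda>z. L z - L c)"
  have ReW: "Re (W z) = l z - l c" for z unfolding W_def by (simp add: LRe)
  have ReWlt: "Re (W z) < a" if "z \<in> D" for z using l(2)[OF that] unfolding ReW a_def by simp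
  define g where "g = (\<lambda>z. W z / (complex_of_real (2 * a) - W z))"
  have "frechet_holomorphic_on g D"
    unfolding frechet_holomorphic_on_def
  proof
    fix x assume x: "x \<in> D"
    have "((\<lambda>z. L z - L c) has_derivative (\<lambda>h. L h - 0)) (at x)"
      by (intro has_derivative_diff bounded_linear_imp_has_derivative[OF Lbl] has_derivative_const)
    then have Wd: "(W has_derivative L) (at x)" by (simp add: W_def)
    have ne: "complex_of_real (2 * a) - W x \<noteq> 0"
    proof
      assume "complex_of_real (2 * a) - W x = 0"
      then have "Re (W x) = 2 * a" by (simp add: complex_eq_iff)
      then show False using ReWlt[OF x] a by simp
    qed
    have "(\<lambda>w. w / (complex_of_real (2 * a) - w)) field_differentiable (at (W x))"
      using ne by (intro derivative_intros) auto
    then obtain d where d: "((\<lambda>w. w / (complex_of_real (2 * a) - w)) has_field_derivative d) (at (W x))"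
      unfolding field_differentiable_def by blast
    have "(g has_derivative (\<lambda>h. d * L h)) (at x)"
      unfolding g_def using has_derivative_compose[OF Wd d[unfolded has_field_derivative_def]] .
    moreover have "\<forall>\<alpha> h. d * L (scaleC \<alpha> h) = scaleC \<alpha> (d * L h)"
      by (simp add: Llin scaleC_complex_def algebra_simps)
    ultimately show "\<exists>f'. (g has_derivative f') (at x) \<and> (\<forall>\<alpha> h. f' (scaleC \<alpha> h) = scaleC \<alpha> (f' h))"
      by blast
  qed
  moreover have "g ` D \<subseteq> ball 0 1"
    using hp_disk(1)[OF a ReWlt] unfolding g_def by auto
  moreover have "g c = 0" unfolding g_def W_def by simp
  moreover have "r \<le> qf (norm (g y)) * (8 * norm (q - y))" if y: "y \<in> D" for y
  proof -
    define \<beta> where "\<beta> = a - Re (W y)"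
    have \<beta>: "\<beta> > 0" using ReWlt[OF y] by (simp add: \<beta>_def)
    have "\<beta> = l (q - y)" unfolding \<beta>_def ReW a_def using linear_diff[OF l(1)] by simp
    then have \<beta>le: "\<beta> \<le> (2 * a / r) * norm (q - y)" using lup by simp
    have A: "a / (4 * \<beta>) \<le> qf (norm (g y))"
      using hp_disk(2)[OF a ReWlt[OF y]] unfolding g_def \<beta>_def by simp
    have "r \<le> a / (4 * \<beta>) * (8 * norm (q - y))"
      using \<beta>le \<beta> a r by (simp add: field_simps)
    also have "\<dots> \<le> qf (norm (g y)) * (8 * norm (q - y))"
      by (rule mult_right_mono[OF A]) simp
    finally show ?thesis .
  qed
  ultimately show ?thesis by blast
qed


lemma ball_of_infdist:
  fixes D :: "'a::real_normed_vector set"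
  assumes D: "open D" and x: "x \<in> D" and e: "e \<le> infdist x (frontier D)"
  shows "ball x e \<subseteq> D"
proof
  fix y assume y: "y \<in> ball x e"
  show "y \<in> D"
  proof (rule ccontr)
    assume yn: "y \<notin> D"
    have "closed_segment x y \<inter> frontier D \<noteq> {}"
      by (rule connected_Int_frontier) (use x yn in auto)
    then obtain f where f: "f \<in> closed_segment x y" "f \<in> frontier D" by blast
    have "norm (f - x) \<le> norm (y - x)" using segment_bound1[OF f(1)] .
    then have "infdist x (frontier D) \<le> dist x y"
      using infdist_le[OF f(2), of x] by (simp add: dist_norm norm_minus_commute)
    then show False using y e by (simp add: dist_commute)
  qed
qed

lemma infdist_of_ball:
  fixes D :: "'a::real_normed_vector set"
  assumes D: "open D" and b: "ball y e \<subseteq> D" and ne: "frontier D \<noteq> {}"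
  shows "e \<le> infdist y (frontier D)"
proof -
  have "e \<le> dist y a" if "a \<in> frontier D" for a
  proof -
    have "a \<notin> D" using that D frontier_disjoint_eq by blast
    then show ?thesis using b by (meson mem_ball not_less subsetD)
  qed
  then show ?thesis unfolding infdist_notempty[OF ne] by (intro cINF_greatest ne) auto
qed

lemma qf_ge1: "0 \<le> r \<Longrightarrow> r < 1 \<Longrightarrow> 1 \<le> qf r"
  unfolding qf_def by (simp add: divide_simps)

theorem lemma2p5:
  fixes D :: "'a::complex_banach set" and F :: "real \<Rightarrow> 'a \<Rightarrow> 'a"
  assumes "open D" and "connected D" and "D \<noteq> {}" and "bounded D" and "convex D"
    and "continuous_holo_semigroup F D"
  shows "\<forall>Ds t0. strictly_inside Ds D \<and> t0 > 0 \<longrightarrow>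
           strictly_inside {F t x | x t. x \<in> Ds \<and> t \<in> {0..t0}} D"
proof (intro allI impI)
  fix Ds :: "'a set" and t0 :: real assume H: "strictly_inside Ds D \<and> t0 > 0"
  have hol: "\<And>t. t \<ge> 0 \<Longrightarrow> frechet_holomorphic_on (F t) D"
    and into: "\<And>t. t \<ge> 0 \<Longrightarrow> F t ` D \<subseteq> D"
    and sg: "\<And>t s x. t \<ge> 0 \<Longrightarrow> s \<ge> 0 \<Longrightarrow> x \<in> D \<Longrightarrow> F (t + s) x = F t (F s x)"
    and lim: "\<And>x. x \<in> D \<Longrightarrow> ((\<lambda>t. F t x) \<longlongrightarrow> x) (at_right 0)"
    using assms(6) unfolding continuous_holo_semigroup_def by blast+
  have intoD: "F t x \<in> D" if "t \<ge> 0" "x \<in> D" for t x using into[OF that(1)] that(2) by blast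
  obtain e where e: "e > 0" "\<forall>x\<in>Ds. e \<le> infdist x (frontier D)" and DsD: "Ds \<subseteq> D"
    using H unfolding strictly_inside_def by blast
  define S where "S = {F t x | x t. x \<in> Ds \<and> t \<in> {0..t0}}"
  have SD: "S \<subseteq> D" unfolding S_def using DsD intoD by auto
  show "strictly_inside S D"
  proof (cases "frontier D = {}")
    case True
    have "Ds = {}"
    proof (rule ccontr)
      assume "Ds \<noteq> {}"
      then obtain x where "x \<in> Ds" by blast
      then have "e \<le> 0" using e True by (simp add: infdist_def)
      then show False using e by simp
    qed
    then have "S = {}" unfolding S_def by simp
    then show ?thesis unfolding strictly_inside_def by (auto intro: exI[of _ 1])
  next
    case False
    have F0: "F 0 x = x" if x: "x \<in> D" for x
    proof -
      define y where "y = F 0 x"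
      have y: "y \<in> D" unfolding y_def using intoD x by simp
      have "F t y = F t x" if "t > 0" for t
      proof -
        have "F (t + 0) x = F t (F 0 x)" using sg[of t 0 x] that x by simp
        then show ?thesis unfolding y_def by simp
      qed
      then have "eventually (\<lambda>t. F t y = F t x) (at_right 0)"
        unfolding eventually_at_right_field by (intro exI[of _ 1]) auto
      then have "((\<lambda>t. F t x) \<longlongrightarrow> y) (at_right 0)"
        using lim[OF y] by (rule Lim_transform_eventually[rotated])
      then show ?thesis using lim[OF x] tendsto_unique[OF trivial_limit_at_right_real] y_def by blast
    qed
    obtain c where c: "c \<in> D" using assms(3) by blast
    obtain r where r: "r > 0" "ball c r \<subseteq> D" using assms(1) c open_contains_ball by blast
    obtain R where R: "\<And>z. z \<in> D \<Longrightarrow> norm (z - c) \<le> R"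
      using assms(4) unfolding bounded_any_center[of D c] by (auto simp: dist_norm norm_minus_commute)
    define hc where "hc = (\<lambda>H :: 'a \<Rightarrow> complex. frechet_holomorphic_on H D \<and> H ` D \<subseteq> ball 0 1)"
    have hcF: "hc (\<lambda>z. H (F t z))" if "hc H" "t \<ge> 0" for H t
      using that frechet_holomorphic_compose[OF hol[OF that(2)] into[OF that(2)]] intoD
      unfolding hc_def by auto
    have hcpos: "0 \<le> qf (norm (H z))" if "hc H" "z \<in> D" for H z
    proof -
      have "norm (H z) < 1" using that unfolding hc_def by auto
      then show ?thesis using qf_ge1[of "norm (H z)"] by simp
    qed
    have hstep: "qf (norm (H z')) \<le> 3 * qf (norm (H z))"
      if "hc H" "ball z \<rho> \<subseteq> D" "\<rho> > 0" "norm (z' - z) \<le> \<rho> / 2" for H z z' \<rho>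
      using local_step[of H D z \<rho> z'] that unfolding hc_def by blast
    have "eventually (\<lambda>t. dist (F t c) c < r / 2) (at_right 0)"
    proof -
      have "r / 2 > 0" using r(1) by simp
      then show ?thesis using lim[OF c] unfolding tendsto_iff by blast
    qed
    then obtain b where b: "b > 0" "\<And>t. t > 0 \<Longrightarrow> t < b \<Longrightarrow> dist (F t c) c < r / 2"
      unfolding eventually_at_right_field by auto
    define \<delta> where "\<delta> = b / 2"
    have \<delta>: "\<delta> > 0" using b by (simp add: \<delta>_def)
    have closeF: "norm (F t c - c) \<le> r / 2" if "0 \<le> t" "t \<le> \<delta>" for t
    proof (cases "t = 0")
      case True then show ?thesis using F0[OF c] r by simp
    next
      case False
      then have "0 < t" "t < b" using that b by (auto simp: \<delta>_def)
      then have "dist (F t c) c < r / 2" by (rule b(2))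
      then show ?thesis by (simp add: dist_norm)
    qed
    have orbit: "\<forall>H t. hc H \<and> 0 \<le> t \<and> t \<le> real n * \<delta> \<longrightarrow> qf (norm (H (F t c))) \<le> 3 ^ n * qf (norm (H c))" for n
    proof (induction n)
      case 0
      then show ?case
      proof (intro allI impI)
        fix H and t :: real assume "hc H \<and> 0 \<le> t \<and> t \<le> real 0 * \<delta>"
        then have "t = 0" by simp
        then show "qf (norm (H (F t c))) \<le> 3 ^ 0 * qf (norm (H c))" using F0[OF c] by simp
      qed
    next
      case (Suc n)
      show ?case
      proof (intro allI impI)
        fix H t assume Ht: "hc H \<and> 0 \<le> t \<and> t \<le> real (Suc n) * \<delta>"
        have pos: "0 \<le> qf (norm (H c))" using hcpos Ht c by blast
        show "qf (norm (H (F t c))) \<le> 3 ^ Suc n * qf (norm (H c))"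
        proof (cases "t \<le> \<delta>")
          case True
          have "qf (norm (H (F t c))) \<le> 3 * qf (norm (H c))"
            using hstep[of H c r "F t c"] Ht r closeF[of t] True by blast
          also have "\<dots> \<le> 3 ^ Suc n * qf (norm (H c))"
            using pos by (intro mult_right_mono) (auto simp: Suc_le_eq)
          finally show ?thesis .
        next
          case False
          define t' where "t' = t - \<delta>"
          have t': "0 \<le> t'" "t' \<le> real n * \<delta>" using False Ht by (auto simp: t'_def algebra_simps)
          have Ft: "F t c = F \<delta> (F t' c)" using sg[of \<delta> t' c] \<delta> t' c by (simp add: t'_def)
          have hH: "hc (\<lambda>z. H (F \<delta> z))" using hcF Ht \<delta> by simp
          have "qf (norm (H (F t c))) \<le> 3 ^ n * qf (norm (H (F \<delta> c)))"
            using Suc.IH hH t' unfolding Ft by blast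
          also have "\<dots> \<le> 3 ^ n * (3 * qf (norm (H c)))"
            using hstep[of H c r "F \<delta> c"] Ht r closeF[of \<delta>] \<delta> by (intro mult_left_mono) auto
          finally show ?thesis by simp
        qed
      qed
    qed
    define e' where "e' = min e r"
    have e': "e' > 0" "e' \<le> e" "e' \<le> r" using e r by (auto simp: e'_def)
    define N where "N = nat \<lceil>2 * R / e'\<rceil> + 1"
    have N: "N \<ge> 1" "2 * R / e' \<le> real N" unfolding N_def by auto linarith
    have segment: "qf (norm (H x)) \<le> 3 ^ N * qf (norm (H c))"
      if x: "x \<in> D" "ball x e \<subseteq> D" and hH: "hc H" for x H
    proof -
      define z where "z = (\<lambda>k::nat. c + (real k / real N) *\<^sub>R (x - c))"
      have zball: "ball (z k) e' \<subseteq> D" if "k \<le> N" for k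
      proof
        fix y assume y: "y \<in> ball (z k) e'"
        define \<theta> where "\<theta> = real k / real N"
        have \<theta>: "0 \<le> \<theta>" "\<theta> \<le> 1" using that N by (auto simp: \<theta>_def divide_simps)
        define v where "v = y - z k"
        have v: "norm v < e'" using y by (simp add: v_def dist_norm norm_minus_commute)
        have "c + v \<in> D" using r v e' by (intro subsetD[OF r(2)]) (auto simp: dist_norm)
        moreover have "x + v \<in> D" using x v e' by (intro subsetD[OF x(2)]) (auto simp: dist_norm)
        ultimately have "(1 - \<theta>) *\<^sub>R (c + v) + \<theta> *\<^sub>R (x + v) \<in> D"
          using convexD_alt[OF assms(5)] \<theta> by blast
        moreover have "(1 - \<theta>) *\<^sub>R (c + v) + \<theta> *\<^sub>R (x + v) = y"
          unfolding v_def z_def \<theta>_def[symmetric] by (simp add: algebra_simps)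
        ultimately show "y \<in> D" by simp
      qed
      have zstep: "norm (z (Suc k) - z k) \<le> e' / 2" for k
      proof -
        have "z (Suc k) - z k = (real (Suc k) / real N - real k / real N) *\<^sub>R (x - c)"
          unfolding z_def by (simp add: scaleR_diff_left)
        also have "real (Suc k) / real N - real k / real N = 1 / real N"
          by (simp add: diff_divide_distrib[symmetric])
        finally have "z (Suc k) - z k = (1 / real N) *\<^sub>R (x - c)" .
        then have "norm (z (Suc k) - z k) = norm (x - c) / real N" by simp
        also have "\<dots> \<le> R / real N" using R[OF x(1)] N by (simp add: divide_right_mono)
        also have "\<dots> \<le> e' / 2" using N e' by (simp add: divide_simps mult.commute) 
        finally show ?thesis .
      qed
      have "k \<le> N \<longrightarrow> qf (norm (H (z k))) \<le> 3 ^ k * qf (norm (H c))" for k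
      proof (induction k)
        case 0 then show ?case by (simp add: z_def)
      next
        case (Suc k)
        show ?case
        proof
          assume k: "Suc k \<le> N"
          have "qf (norm (H (z (Suc k)))) \<le> 3 * qf (norm (H (z k)))"
            using hstep[OF hH zball[of k] e'(1) zstep[of k]] k by simp
          also have "\<dots> \<le> 3 * (3 ^ k * qf (norm (H c)))" using Suc.IH k by simp
          finally show "qf (norm (H (z (Suc k)))) \<le> 3 ^ Suc k * qf (norm (H c))" by simp
        qed
      qed
      moreover have "z N = x" using N by (simp add: z_def)
      ultimately show ?thesis by auto
    qed
    define n0 where "n0 = nat \<lceil>t0 / \<delta>\<rceil>"
    have n0: "t0 \<le> real n0 * \<delta>" using \<delta> unfolding n0_def
      by (metis divide_le_eq of_nat_nat real_nat_ceiling_ge le_nat_iff ceiling_le_iff order.refl)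
    define M :: real where "M = 3 ^ (N + n0)"
    have M: "M > 0" by (simp add: M_def)
    have bound: "qf (norm (g y)) \<le> M" if "y \<in> S" "hc g" "g c = 0" for y g
    proof -
      obtain x t where y: "y = F t x" "x \<in> Ds" "t \<in> {0..t0}" using \<open>y \<in> S\<close> unfolding S_def by blast
      have t: "0 \<le> t" "t \<le> real n0 * \<delta>" using y(3) n0 by auto
      have xD: "x \<in> D" using y(2) DsD by blast
      have x: "x \<in> D" "ball x e \<subseteq> D" using xD y(2) e(2) ball_of_infdist[OF assms(1) xD, of e] by auto
      have "qf (norm (g (F t x))) \<le> 3 ^ N * qf (norm (g (F t c)))"
        using segment[OF x hcF[OF that(2) t(1)]] .
      also have "\<dots> \<le> 3 ^ N * (3 ^ n0 * qf (norm (g c)))"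
      proof -
        have "qf (norm (g (F t c))) \<le> 3 ^ n0 * qf (norm (g c))"
          using orbit[of n0] that(2) t by blast
        then show ?thesis by (rule mult_left_mono) simp
      qed
      also have "\<dots> = M" using that(3) by (simp add: M_def qf_def power_add)
      finally show ?thesis using y(1) by simp
    qed
    define \<epsilon> where "\<epsilon> = r / (8 * M)"
    have \<epsilon>: "\<epsilon> > 0" using r M by (simp add: \<epsilon>_def)
    have ballS: "ball y \<epsilon> \<subseteq> D" if y: "y \<in> S" for y
    proof
      fix q assume q: "q \<in> ball y \<epsilon>"
      show "q \<in> D"
      proof (rule ccontr)
        assume qn: "q \<notin> D"
        obtain g :: "'a \<Rightarrow> complex" where g: "frechet_holomorphic_on g D" "g ` D \<subseteq> ball 0 1" "g c = 0"
          "\<And>y. y \<in> D \<Longrightarrow> r \<le> qf (norm (g y)) * (8 * norm (q - y))"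
          using disk_functional[OF assms(1) assms(5) c r(2) r(1) qn] by blast
        have hg: "hc g" using g unfolding hc_def by blast
        have yD: "y \<in> D" using y SD by blast
        have "r \<le> qf (norm (g y)) * (8 * norm (q - y))" using g(4)[OF yD] .
        also have "\<dots> \<le> M * (8 * norm (q - y))"
          using bound[OF y hg g(3)] by (intro mult_right_mono) auto
        also have "\<dots> < M * (8 * \<epsilon>)"
          using q M by (intro mult_strict_left_mono) (auto simp: dist_norm norm_minus_commute)
        also have "\<dots> = r" using M by (simp add: \<epsilon>_def)
        finally show False by simp
      qed
    qed
    have "bounded S" using SD assms(4) bounded_subset by blast
    moreover have "\<forall>y\<in>S. \<epsilon> \<le> infdist y (frontier D)"
      using ballS infdist_of_ball[OF assms(1) _ False] by blast
    ultimately show ?thesis unfolding strictly_inside_def using SD \<epsilon> by blast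
  qed
qed

end
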